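(* Let $G_1=(V,E_1)$, $G_2=(V,E_2)$ be a duplex network on a finite node set $V$ with driver budgets $k_1,k_2$, and let $(M_1,M_2)\in\mathcal M_1(k_1)\times\mathcal M_2(k_2)$ be a state. Let $\mathcal P$ be a feasible CLAP from $v_0\in\mathrm{DD}_1$ to $v_k\in\mathrm{DD}_2$ in this state. Applying $\mathcal P$ yields a new state $(M_1',M_2')$ satisfying: (i) $|D(M_1')|=k_1$ and $|D(M_2')|=k_2$; (ii) $\Delta(M_1',M_2')=\Delta(M_1,M_2)-2$; (iii) $|U(M_1',M_2')|=|U(M_1,M_2)|-1$.
   Context: For $\ell\in\{1,2\}$, $\mathcal B_\ell$ is the bipartite graph with vertex classes $V^+=\{v^+\}$, $V^-=\{v^-\}$ and an edge $\{u^+,v^-\}$ for each $(u,v)\in E_\ell$. For a matching $M$ in $\mathcal B_\ell$, $D(M)=\{v\in V: v^-\text{ uncovered by }M\}$, and $|D(M)|=|V|-|M|$. $\mathcal M_\ell(k_\ell)$ is the set of matchings in $\mathcal B_\ell$ of size $|V|-k_\ell$. With $D_\ell=D(M_\ell)$: $U(M_1,M_2)=D_1\cup D_2$, $\mathrm{DD}_1=D_1\setminus D_2$, $\mathrm{DD}_2=D_2\setminus D_1$, $\Delta(M_1,M_2)=|\mathrm{DD}_1|+|\mathrm{DD}_2|$. An $M_\ell$-alternating path is a simple path in $\mathcal B_\ell$ whose edges alternate between $M_\ell$ and non-$M_\ell$. An admissible segment $(u\xrightarrow{\ell}v)$ requires an $M_\ell$-alternating witness path between $u^-$ and $v^-$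 and: for $\ell=1$, $u\in D_1$, $v\notin D_1$; for $\ell=2$, $u\notin D_2$, $v\in D_2$. A CLAP is a sequence of admissible segments $v_0\xrightarrow{\ell_1}v_1\cdots\xrightarrow{\ell_k}v_k$, each with a chosen witness path, with $v_0\in\mathrm{DD}_1$, $v_k\in\mathrm{DD}_2$, consecutive layers different ($\ell_{i+1}\ne\ell_i$), and all $v_i$ distinct. It is feasible if, for each layer $\ell$, the witness paths of its layer-$\ell$ segments are pairwise edge-disjoint. Applying $\mathcal P$ means replacing, for each $\ell$, $M_\ell$ by the symmetric difference $M_\ell\triangle\bigcup E(p)$, where the union runs over the edge sets of the witness paths $p$ of all layer-$\ell$ segments of $\mathcal P$. *)

theory Defs
  imports Main
begin

text \<open>Vertices of the bipartite graph B_l: (v, True) is v^+, (v, False) is v^-.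
  The edge {u^+, v^-} of B_l is identified with the pair (u,v) in E_l.
  Hence a matching of B_l is a set of pairs in E_l with pairwise distinct tails and heads.\<close>

definition matching :: "('v \<times> 'v) set \<Rightarrow> ('v \<times> 'v) set \<Rightarrow> bool" where
  "matching E M \<longleftrightarrow> M \<subseteq> E \<and>
     (\<forall>a b c d. (a, b) \<in> M \<longrightarrow> (c, d) \<in> M \<longrightarrow> (a = c \<or> b = d) \<longrightarrow> (a = c \<and> b = d))"

text \<open>D(M): nodes v whose copy v^- is uncovered by M.\<close>
definition Dset :: "'v set \<Rightarrow> ('v \<times> 'v) set \<Rightarrow> 'v set" where
  "Dset V M = {v \<in> V. \<forall>u. (u, v) \<notin> M}"

text \<open>M_l(k): matchings of B_l of size |V| - k (empty if k > |V|).\<close>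
definition Mset :: "'v set \<Rightarrow> ('v \<times> 'v) set \<Rightarrow> nat \<Rightarrow> ('v \<times> 'v) set set" where
  "Mset V E k = {M. matching E M \<and> int (card M) = int (card V) - int k}"

definition bip_adj :: "('v \<times> 'v) set \<Rightarrow> 'v \<times> bool \<Rightarrow> 'v \<times> bool \<Rightarrow> bool" where
  "bip_adj E x y \<longleftrightarrow> (snd x \<and> \<not> snd y \<and> (fst x, fst y) \<in> E) \<or> (snd y \<and> \<not> snd x \<and> (fst y, fst x) \<in> E)"

definition bedge :: "'v \<times> bool \<Rightarrow> 'v \<times> bool \<Rightarrow> 'v \<times> 'v" where
  "bedge x y = (if snd x then (fst x, fst y) else (fst y, fst x))"

definition path_edges :: "('v \<times> bool) list \<Rightarrow> ('v \<times> 'v) set" where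
  "path_edges p = {bedge (p ! i) (p ! Suc i) | i. Suc i < length p}"

definition alt_path :: "('v \<times> 'v) set \<Rightarrow> ('v \<times> 'v) set \<Rightarrow> ('v \<times> bool) list
    \<Rightarrow> 'v \<times> bool \<Rightarrow> 'v \<times> bool \<Rightarrow> bool" where
  "alt_path E M p x y \<longleftrightarrow> p \<noteq> [] \<and> hd p = x \<and> last p = y \<and> distinct p \<and>
     (\<forall>i. Suc i < length p \<longrightarrow> bip_adj E (p ! i) (p ! Suc i)) \<and>
     (\<forall>i. Suc (Suc i) < length p \<longrightarrow>
        (bedge (p ! i) (p ! Suc i) \<in> M) \<noteq> (bedge (p ! Suc i) (p ! Suc (Suc i)) \<in> M))"

definition sel :: "nat \<Rightarrow> 'a \<Rightarrow> 'a \<Rightarrow> 'a" where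
  "sel l a b = (if l = 1 then a else b)"

definition admissible_seg :: "'v set \<Rightarrow> ('v \<times> 'v) set \<Rightarrow> ('v \<times> 'v) set \<Rightarrow> nat
    \<Rightarrow> 'v \<Rightarrow> 'v \<Rightarrow> ('v \<times> bool) list \<Rightarrow> bool" where
  "admissible_seg V E M l u v p \<longleftrightarrow> alt_path E M p (u, False) (v, False) \<and>
     (if l = 1 then u \<in> Dset V M \<and> v \<notin> Dset V M else u \<notin> Dset V M \<and> v \<in> Dset V M)"

definition DD1 :: "'v set \<Rightarrow> ('v \<times> 'v) set \<Rightarrow> ('v \<times> 'v) set \<Rightarrow> 'v set" where
  "DD1 V M1 M2 = Dset V M1 - Dset V M2"
definition DD2 :: "'v set \<Rightarrow> ('v \<times> 'v) set \<Rightarrow> ('v \<times> 'v) set \<Rightarrow> 'v set" where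
  "DD2 V M1 M2 = Dset V M2 - Dset V M1"
definition Uset :: "'v set \<Rightarrow> ('v \<times> 'v) set \<Rightarrow> ('v \<times> 'v) set \<Rightarrow> 'v set" where
  "Uset V M1 M2 = Dset V M1 \<union> Dset V M2"
definition Delta :: "'v set \<Rightarrow> ('v \<times> 'v) set \<Rightarrow> ('v \<times> 'v) set \<Rightarrow> nat" where
  "Delta V M1 M2 = card (DD1 V M1 M2) + card (DD2 V M1 M2)"

text \<open>A CLAP v_0 -l_1-> v_1 ... -l_k-> v_k: vertices vs = [v_0..v_k], layers ls = [l_1..l_k],
  witness paths ps (ps ! i witnesses the segment from vs ! i to vs ! (i+1) in layer ls ! i).\<close>
definition is_CLAP :: "'v set \<Rightarrow> ('v \<times> 'v) set \<Rightarrow> ('v \<times> 'v) set \<Rightarrow> ('v \<times> 'v) set \<Rightarrow> ('v \<times> 'v) set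
    \<Rightarrow> 'v list \<Rightarrow> nat list \<Rightarrow> ('v \<times> bool) list list \<Rightarrow> bool" where
  "is_CLAP V E1 E2 M1 M2 vs ls ps \<longleftrightarrow>
     length vs = Suc (length ls) \<and> length ps = length ls \<and>
     (\<forall>i < length ls. ls ! i \<in> {1, 2} \<and>
        admissible_seg V (sel (ls ! i) E1 E2) (sel (ls ! i) M1 M2) (ls ! i) (vs ! i) (vs ! Suc i) (ps ! i)) \<and>
     hd vs \<in> DD1 V M1 M2 \<and> last vs \<in> DD2 V M1 M2 \<and>
     (\<forall>i. Suc i < length ls \<longrightarrow> ls ! Suc i \<noteq> ls ! i) \<and>
     distinct vs"

definition feasible_CLAP :: "nat list \<Rightarrow> ('v \<times> bool) list list \<Rightarrow> bool" where
  "feasible_CLAP ls ps \<longleftrightarrow>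
     (\<forall>i j. i < length ls \<longrightarrow> j < length ls \<longrightarrow> i \<noteq> j \<longrightarrow> ls ! i = ls ! j \<longrightarrow>
        path_edges (ps ! i) \<inter> path_edges (ps ! j) = {})"

definition symdiff :: "'a set \<Rightarrow> 'a set \<Rightarrow> 'a set" where
  "symdiff A B = (A - B) \<union> (B - A)"

definition apply_layer :: "('v \<times> 'v) set \<Rightarrow> nat \<Rightarrow> nat list \<Rightarrow> ('v \<times> bool) list list \<Rightarrow> ('v \<times> 'v) set" where
  "apply_layer M l ls ps = symdiff M (\<Union>{path_edges (ps ! i) | i. i < length ls \<and> ls ! i = l})"

end

theory Submission
  imports Defs
begin

definition inc :: "'v \<times> bool \<Rightarrow> 'v \<times> 'v \<Rightarrow> bool" where
  "inc x e \<longleftrightarrow> (if snd x then fst e = fst x else snd e = fst x)"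

lemma inc_iff: "inc z e \<longleftrightarrow> z = (fst e, True) \<or> z = (snd e, False)"
  by (cases z) (auto simp: inc_def)

lemma matching_inc: "matching E M \<longleftrightarrow> M \<subseteq> E \<and>
   (\<forall>x e e'. e \<in> M \<longrightarrow> e' \<in> M \<longrightarrow> inc x e \<longrightarrow> inc x e' \<longrightarrow> e = e')"
proof
  assume m: "matching E M"
  have "e = e'" if "e \<in> M" "e' \<in> M" "inc x e" "inc x e'" for x e e'
  proof -
    obtain a b c d where ab: "e = (a,b)" "e' = (c,d)" by (cases e, cases e') auto
    have "a = c \<or> b = d" using that(3,4) unfolding ab inc_def by (auto split: if_splits)
    moreover have "(a,b) \<in> M" "(c,d) \<in> M" using that ab by auto
    ultimately show ?thesis using m unfolding ab matching_def by blast
  qed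
  moreover have "M \<subseteq> E" using m unfolding matching_def by blast
  ultimately show "M \<subseteq> E \<and> (\<forall>x e e'. e \<in> M \<longrightarrow> e' \<in> M \<longrightarrow> inc x e \<longrightarrow> inc x e' \<longrightarrow> e = e')"
    by blast
next
  assume h: "M \<subseteq> E \<and> (\<forall>x e e'. e \<in> M \<longrightarrow> e' \<in> M \<longrightarrow> inc x e \<longrightarrow> inc x e' \<longrightarrow> e = e')"
  have hh: "\<And>x e e'. e \<in> M \<Longrightarrow> e' \<in> M \<Longrightarrow> inc x e \<Longrightarrow> inc x e' \<Longrightarrow> e = e'" using h by blast
  have "a = c \<and> b = d" if "(a,b) \<in> M" "(c,d) \<in> M" "a = c \<or> b = d" for a b c d
  proof (cases "a = c")
    case True then show ?thesis using hh[OF that(1,2), of "(a,True)"] by (simp add: inc_def)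
  next
    case False then show ?thesis using that(3) hh[OF that(1,2), of "(b,False)"] by (simp add: inc_def)
  qed
  then show "matching E M" using h unfolding matching_def by blast
qed

lemma Dset_inc: "v \<in> Dset V M \<longleftrightarrow> v \<in> V \<and> (\<forall>e\<in>M. \<not> inc (v,False) e)"
  by (auto simp: Dset_def inc_def)

lemma card_matching:
  assumes "finite V" "E \<subseteq> V \<times> V" "matching E M"
  shows "card M + card (Dset V M) = card V"
proof -
  have ME: "M \<subseteq> V \<times> V" using assms matching_def by blast
  have fin: "finite M" using ME assms(1) finite_subset by blast
  have inj: "inj_on snd M" using assms(3) unfolding matching_def inj_on_def by auto
  have img: "snd ` M = V - Dset V M"
  proof
    show "snd ` M \<subseteq> V - Dset V M" using ME by (auto simp: Dset_def)
    show "V - Dset V M \<subseteq> snd ` M"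
    proof
      fix v assume "v \<in> V - Dset V M"
      then obtain u where "(u,v) \<in> M" by (auto simp: Dset_def)
      then show "v \<in> snd ` M" by force
    qed
  qed
  have "card M = card (V - Dset V M)" using card_image[OF inj] img by simp
  also have "\<dots> = card V - card (Dset V M)"
    by (rule card_Diff_subset) (auto simp: Dset_def intro: finite_subset[OF _ assms(1)])
  finally show ?thesis
    using card_mono[OF assms(1), of "Dset V M"] by (auto simp: Dset_def)
qed

lemma bip_adj_sym: "bip_adj E x y \<Longrightarrow> bip_adj E y x"
  by (auto simp: bip_adj_def)
lemma bedge_sym: "bip_adj E x y \<Longrightarrow> bedge y x = bedge x y"
  by (auto simp: bip_adj_def bedge_def)

lemma alt_path_rev:
  assumes "alt_path E M p x y"
  shows "alt_path E M (rev p) y x" "path_edges (rev p) = path_edges p"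
proof -
  let ?n = "length p"
  have adj: "\<And>i. Suc i < ?n \<Longrightarrow> bip_adj E (p ! i) (p ! Suc i)"
    using assms by (auto simp: alt_path_def)
  have alt: "\<And>i. Suc (Suc i) < ?n \<Longrightarrow>
        (bedge (p ! i) (p ! Suc i) \<in> M) \<noteq> (bedge (p ! Suc i) (p ! Suc (Suc i)) \<in> M)"
    using assms by (auto simp: alt_path_def)
  have r1: "\<And>i. Suc i < ?n \<Longrightarrow> rev p ! i = p ! Suc (?n - 2 - i) \<and> rev p ! Suc i = p ! (?n - 2 - i)"
    by (auto simp: rev_nth Suc_diff_Suc numeral_2_eq_2)
  have "rev p \<noteq> [] \<and> hd (rev p) = y \<and> last (rev p) = x \<and> distinct (rev p)"
    using assms by (auto simp: alt_path_def hd_rev last_rev)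
  moreover have "\<forall>i. Suc i < ?n \<longrightarrow> bip_adj E (rev p ! i) (rev p ! Suc i)"
  proof (intro allI impI)
    fix i assume i: "Suc i < ?n"
    then have "Suc (?n - 2 - i) < ?n" by auto
    then show "bip_adj E (rev p ! i) (rev p ! Suc i)"
      using r1[OF i] adj[of "?n - 2 - i"] bip_adj_sym by metis
  qed
  moreover have "\<forall>i. Suc (Suc i) < ?n \<longrightarrow>
        (bedge (rev p ! i) (rev p ! Suc i) \<in> M) \<noteq> (bedge (rev p ! Suc i) (rev p ! Suc (Suc i)) \<in> M)"
  proof (intro allI impI)
    fix i assume i: "Suc (Suc i) < ?n"
    define j where "j = ?n - 3 - i"
    have j: "Suc (Suc j) < ?n" "?n - 2 - i = Suc j" "?n - 2 - Suc i = j" using i by (auto simp: j_def)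
    have a: "rev p ! i = p ! Suc (Suc j)" "rev p ! Suc i = p ! Suc j" "rev p ! Suc (Suc i) = p ! j"
      using r1[of i] r1[of "Suc i"] i j by auto
    show "(bedge (rev p ! i) (rev p ! Suc i) \<in> M) \<noteq> (bedge (rev p ! Suc i) (rev p ! Suc (Suc i)) \<in> M)"
      unfolding a using alt[OF j(1)] bedge_sym[OF adj[of j]] bedge_sym[OF adj[of "Suc j"]] j(1) by auto
  qed
  ultimately show "alt_path E M (rev p) y x" by (simp add: alt_path_def)
  show "path_edges (rev p) = path_edges p"
  proof
    show "path_edges (rev p) \<subseteq> path_edges p"
    proof
      fix e assume "e \<in> path_edges (rev p)"
      then obtain i where i: "Suc i < ?n" "e = bedge (rev p ! i) (rev p ! Suc i)" by (auto simp: path_edges_def)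
      then have "e = bedge (p ! (?n - 2 - i)) (p ! Suc (?n - 2 - i))" "Suc (?n - 2 - i) < ?n"
        using r1[OF i(1)] bedge_sym[OF adj[of "?n - 2 - i"]] by auto
      then show "e \<in> path_edges p" by (auto simp: path_edges_def)
    qed
    show "path_edges p \<subseteq> path_edges (rev p)"
    proof
      fix e assume "e \<in> path_edges p"
      then obtain i where i: "Suc i < ?n" "e = bedge (p ! i) (p ! Suc i)" by (auto simp: path_edges_def)
      define j where "j = ?n - 2 - i"
      have j: "Suc j < ?n" "?n - 2 - j = i" using i by (auto simp: j_def)
      have "e = bedge (rev p ! j) (rev p ! Suc j)"
        using r1[OF j(1)] j i bedge_sym[OF adj[of i]] by auto
      then show "e \<in> path_edges (rev p)" using j by (auto simp: path_edges_def)
    qed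
  qed
qed

locale gpath =
  fixes E M :: "('v \<times> 'v) set" and p :: "('v \<times> bool) list" and a b :: 'v
  assumes ap: "alt_path E M p (a,False) (b,False)"
    and unc: "\<forall>e\<in>M. \<not> inc (a,False) e"
    and ab: "a \<noteq> b"
begin

definition ed :: "nat \<Rightarrow> 'v \<times> 'v" where "ed i = bedge (p!i) (p!Suc i)"

lemma ne: "p \<noteq> []" using ap by (simp add: alt_path_def)
lemma p0: "p!0 = (a,False)" using ap ne by (simp add: alt_path_def hd_conv_nth)
lemma plast: "p!(length p - 1) = (b,False)" using ap ne by (simp add: alt_path_def last_conv_nth)
lemma dist: "distinct p" using ap by (simp add: alt_path_def)
lemma n2: "length p \<ge> 2"
proof (rule ccontr)
  assume "\<not> length p \<ge> 2"
  then have "length p = 1" using ne by (cases p) (auto simp: not_le)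
  then show False using p0 plast ab by simp
qed
lemma adj: "Suc i < length p \<Longrightarrow> bip_adj E (p!i) (p!Suc i)" using ap by (simp add: alt_path_def)
lemma alt: "Suc (Suc i) < length p \<Longrightarrow> (ed i \<in> M) \<noteq> (ed (Suc i) \<in> M)"
  using ap by (simp add: alt_path_def ed_def)

lemma snd_nth: "i < length p \<Longrightarrow> snd (p!i) = odd i"
proof (induction i)
  case 0 then show ?case using p0 by simp
next
  case (Suc i)
  then have "snd (p!Suc i) = (\<not> snd (p!i))" using adj[of i] by (auto simp: bip_adj_def)
  then show ?case using Suc by simp
qed

lemma odd_n: "odd (length p)"
proof -
  have "snd (p!(length p - 1)) = odd (length p - 1)" using snd_nth n2 by simp
  then have "even (length p - 1)" using plast by simp
  then show ?thesis using n2 by presburger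
qed

lemma inc_ed: "Suc i < length p \<Longrightarrow> inc (p!i) (ed i) \<and> inc (p!Suc i) (ed i)"
  using adj[of i] by (auto simp: bip_adj_def ed_def bedge_def inc_def)

lemma inc_ed_only: "Suc i < length p \<Longrightarrow> inc z (ed i) \<Longrightarrow> z = p!i \<or> z = p!Suc i"
  using adj[of i] unfolding inc_iff
  by (cases "p!i"; cases "p!Suc i") (auto simp: bip_adj_def ed_def bedge_def)

lemma ed_E: "Suc i < length p \<Longrightarrow> ed i \<in> E"
  using adj[of i] by (auto simp: bip_adj_def ed_def bedge_def)

lemma ed_M: "Suc i < length p \<Longrightarrow> (ed i \<in> M) = odd i"
proof (induction i)
  case 0
  have "inc (p!0) (ed 0)" using inc_ed[OF 0] by simp
  then show ?case using unc p0 by auto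
next
  case (Suc i)
  then show ?case using alt[of i] by auto
qed

lemma pe: "path_edges p = {ed i | i. Suc i < length p}"
  by (simp add: path_edges_def ed_def)

lemma pE: "path_edges p \<subseteq> E" using ed_E pe by auto

lemma nth_inj: "i < length p \<Longrightarrow> j < length p \<Longrightarrow> p!i = p!j \<Longrightarrow> i = j"
  using dist nth_eq_iff_index_eq by blast

lemma inc_on_path: "e \<in> path_edges p \<Longrightarrow> inc z e \<Longrightarrow> \<exists>i<length p. z = p!i"
proof -
  assume "e \<in> path_edges p" "inc z e"
  then obtain i where i: "Suc i < length p" "e = ed i" unfolding pe by auto
  then have "z = p!i \<or> z = p!Suc i" using inc_ed_only \<open>inc z e\<close> by simp
  then show ?thesis using i by (metis Suc_lessD)
qed

lemma inc_pos: "i < length p \<Longrightarrow> Suc j < length p \<Longrightarrow> inc (p!i) (ed j) \<Longrightarrow> j = i \<or> Suc j = i"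
  using inc_ed_only[of j "p!i"] nth_inj by fastforce

lemma cover: "0 < i \<Longrightarrow> i < length p \<Longrightarrow> \<exists>e\<in>path_edges p. e \<in> M \<and> inc (p!i) e"
proof -
  assume i: "0 < i" "i < length p"
  show ?thesis
  proof (cases "odd i")
    case True
    then have "Suc i < length p" using odd_n i by (metis Suc_lessI even_Suc)
    then show ?thesis using ed_M[of i] True inc_ed[of i] pe by blast
  next
    case False
    then have s: "Suc (i - 1) = i" "odd (i - 1)" using i by auto
    then have "Suc (i-1) < length p" using i by simp
    then show ?thesis using ed_M[of "i-1"] s inc_ed[of "i-1"] pe by (metis (mono_tags, lifting) mem_Collect_eq)
  qed
qed

lemma nonM_unique:
  assumes "i < length p" "e \<in> path_edges p - M" "e' \<in> path_edges p - M" "inc (p!i) e" "inc (p!i) e'"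
  shows "e = e'"
proof -
  obtain j where j: "Suc j < length p" "e = ed j" using assms(2) pe by auto
  obtain j' where j': "Suc j' < length p" "e' = ed j'" using assms(3) pe by auto
  have "even j" "even j'" using ed_M j j' assms(2,3) by auto
  moreover have "j = i \<or> Suc j = i" "j' = i \<or> Suc j' = i"
    using inc_pos assms j j' by auto
  ultimately have "j = j'" by auto
  then show ?thesis using j j' by simp
qed

lemma nonM_exists: "Suc i < length p \<Longrightarrow> \<exists>e\<in>path_edges p - M. inc (p!i) e"
proof -
  assume i: "Suc i < length p"
  show ?thesis
  proof (cases "even i")
    case True
    then show ?thesis using ed_M[OF i] inc_ed[OF i] pe i by blast
  next
    case False
    then have s: "Suc (i - 1) = i" "even (i - 1)" by auto
    then have "Suc (i-1) < length p" using i by simp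
    then show ?thesis using ed_M[of "i-1"] s inc_ed[of "i-1"] pe by (metis (mono_tags, lifting) DiffI mem_Collect_eq)
  qed
qed

lemma end_none: "e \<in> path_edges p - M \<Longrightarrow> inc (p!(length p - 1)) e \<Longrightarrow> False"
proof -
  assume e: "e \<in> path_edges p - M" "inc (p!(length p - 1)) e"
  obtain j where j: "Suc j < length p" "e = ed j" using e(1) pe by auto
  then have "j = length p - 1 \<or> Suc j = length p - 1" using inc_pos[of "length p - 1" j] e n2 by auto
  then have "Suc j = length p - 1" using j by auto
  then have "odd j" using odd_n by presburger
  then show False using ed_M[OF j(1)] j e by auto
qed

lemma b_in_V: "E \<subseteq> V \<times> V \<Longrightarrow> b \<in> V"
proof -
  assume EV: "E \<subseteq> V \<times> V"
  have l: "Suc (length p - 2) < length p" "Suc (length p - 2) = length p - 1" using n2 by auto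
  have "inc (p!(length p - 1)) (ed (length p - 2))" using inc_ed[OF l(1)] l(2) by simp
  then have "snd (ed (length p - 2)) = b" using plast by (simp add: inc_def)
  then show "b \<in> V" using ed_E[OF l(1)] EV by auto
qed

end

lemma family:
  fixes V :: "'v set" and E M :: "('v \<times> 'v) set" and J :: "nat set"
    and q :: "nat \<Rightarrow> ('v \<times> bool) list" and a b :: "nat \<Rightarrow> 'v"
  assumes EV: "E \<subseteq> V \<times> V" and m: "matching E M"
    and ap: "\<forall>j\<in>J. alt_path E M (q j) (a j, False) (b j, False)"
    and aD: "\<forall>j\<in>J. a j \<in> Dset V M"
    and bD: "\<forall>j\<in>J. b j \<notin> Dset V M"
    and ia: "inj_on a J" and ib: "inj_on b J"
    and disj: "\<forall>j\<in>J. \<forall>k\<in>J. j \<noteq> k \<longrightarrow> path_edges (q j) \<inter> path_edges (q k) = {}"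
  shows "matching E (symdiff M (\<Union>j\<in>J. path_edges (q j)))"
    "Dset V (symdiff M (\<Union>j\<in>J. path_edges (q j))) = (Dset V M - a ` J) \<union> b ` J"
proof -
  define P where "P = (\<Union>j\<in>J. path_edges (q j))"
  define M' where "M' = symdiff M P"
  have mm: "\<And>x e e'. e \<in> M \<Longrightarrow> e' \<in> M \<Longrightarrow> inc x e \<Longrightarrow> inc x e' \<Longrightarrow> e = e'"
    using m unfolding matching_inc by blast
  have G: "gpath E M (q j) (a j) (b j)" if "j \<in> J" for j
  proof
    show "alt_path E M (q j) (a j, False) (b j, False)" using ap that by blast
    show "\<forall>e\<in>M. \<not> inc (a j, False) e" using aD that by (simp add: Dset_inc)
    show "a j \<noteq> b j" using aD bD that by metis
  qed
  have M'_iff: "f \<in> M' \<longleftrightarrow> (f \<in> M \<and> f \<notin> P) \<or> (f \<in> P \<and> f \<notin> M)" for f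
    by (auto simp: M'_def symdiff_def)
  have VD: "j = k" if hv: "j \<in> J" "k \<in> J" "i < length (q j)" "i' < length (q k)" "q j ! i = q k ! i'" for j k i i'
  proof (rule ccontr)
    assume jk: "j \<noteq> k"
    show False
    proof (cases "i = 0")
      case True
      have xa: "q j ! i = (a j, False)" using gpath.p0[OF G[OF hv(1)]] True by simp
      show False
      proof (cases "i' = 0")
        case True
        then have "a j = a k" using xa hv(5) gpath.p0[OF G[OF hv(2)]] by simp
        then show False using ia hv jk by (meson inj_on_def)
      next
        case False
        then obtain g where "g \<in> path_edges (q k)" "g \<in> M" "inc (q k ! i') g"
          using gpath.cover[OF G[OF hv(2)], of i'] hv by auto
        then show False using gpath.unc[OF G[OF hv(1)]] xa hv(5) by auto
      qed
    next
      case False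
      then obtain g where g: "g \<in> path_edges (q j)" "g \<in> M" "inc (q j ! i) g"
        using gpath.cover[OF G[OF hv(1)], of i] hv by auto
      show False
      proof (cases "i' = 0")
        case True
        have "q k ! i' = (a k, False)" using gpath.p0[OF G[OF hv(2)]] True by simp
        then show False using gpath.unc[OF G[OF hv(2)]] g hv(5) by auto
      next
        case False
        then obtain g' where g': "g' \<in> path_edges (q k)" "g' \<in> M" "inc (q k ! i') g'"
          using gpath.cover[OF G[OF hv(2)], of i'] hv by auto
        have "g = g'" using mm[OF g(2) g'(2) g(3)] g'(3) hv(5) by simp
        then show False using disj hv jk g g' by blast
      qed
    qed
  qed
  have ON: "\<exists>j\<in>J. \<exists>i<length (q j). x = q j ! i" if "e \<in> P" "inc x e" for x e
    using that gpath.inc_on_path[OF G] unfolding P_def by blast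
  have ONLY: "e \<in> path_edges (q j)" if ho: "j \<in> J" "i < length (q j)" "e \<in> P" "inc (q j ! i) e" for j i e
  proof -
    obtain k where k: "k \<in> J" "e \<in> path_edges (q k)" using ho(3) unfolding P_def by blast
    then obtain i' where "i' < length (q k)" "q j ! i = q k ! i'" using gpath.inc_on_path[OF G[OF k(1)] k(2) ho(4)] by auto
    then have "j = k" using VD ho k by blast
    then show ?thesis using k by simp
  qed
  have CL: "f \<in> path_edges (q j) \<and> f \<notin> M" if hc: "j \<in> J" "i < length (q j)" "f \<in> M'" "inc (q j ! i) f" for j i f
  proof (cases "f \<in> P")
    case True
    then show ?thesis using ONLY hc M'_iff by blast
  next
    case False
    then have fM: "f \<in> M" using hc M'_iff by blast
    show ?thesis
    proof (cases "i = 0")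
      case True
      then show ?thesis using gpath.p0[OF G[OF hc(1)]] gpath.unc[OF G[OF hc(1)]] fM hc(4) by auto
    next
      case False
      then obtain g where g: "g \<in> path_edges (q j)" "g \<in> M" "inc (q j ! i) g"
        using gpath.cover[OF G[OF hc(1)], of i] hc by auto
      then have "g = f" using mm fM hc(4) by blast
      then have "f \<in> P" using g hc(1) unfolding P_def by blast
      then show ?thesis using \<open>f \<notin> P\<close> by blast
    qed
  qed
  have PE: "P \<subseteq> E" unfolding P_def using gpath.pE[OF G] by blast
  have ME: "M \<subseteq> E" using m by (simp add: matching_def)
  have "M' \<subseteq> E" using PE ME M'_iff by blast
  moreover have "e = e'" if hm: "e \<in> M'" "e' \<in> M'" "inc x e" "inc x e'" for x e e'
  proof (cases "\<exists>j\<in>J. \<exists>i<length (q j). x = q j ! i")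
    case True
    then obtain j i where ji: "j \<in> J" "i < length (q j)" "x = q j ! i" by blast
    show ?thesis using CL[OF ji(1,2) hm(1)] CL[OF ji(1,2) hm(2)] hm(3,4) ji
        gpath.nonM_unique[OF G[OF ji(1)] ji(2), of e e'] by blast
  next
    case False
    then have "e \<notin> P" "e' \<notin> P" using ON hm by blast+
    then have "e \<in> M" "e' \<in> M" using M'_iff hm by blast+
    then show ?thesis using mm hm by blast
  qed
  ultimately show "matching E (symdiff M (\<Union>j\<in>J. path_edges (q j)))"
    unfolding M'_def[symmetric] P_def[symmetric] by (simp add: matching_inc)
  have "v \<in> Dset V M' \<longleftrightarrow> (v \<in> Dset V M \<and> v \<notin> a ` J) \<or> v \<in> b ` J" for v
  proof (cases "\<exists>j\<in>J. \<exists>i<length (q j). (v, False) = q j ! i")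
    case True
    then obtain j i where ji: "j \<in> J" "i < length (q j)" "(v,False) = q j ! i" by blast
    note g = G[OF ji(1)]
    have l: "length (q j) - 1 < length (q j)" using gpath.n2[OF g] by simp
    have bJ: "v \<in> b ` J \<longleftrightarrow> i = length (q j) - 1"
    proof
      assume "v \<in> b ` J"
      then obtain k where k: "k \<in> J" "v = b k" by auto
      have lk: "length (q k) - 1 < length (q k)" using gpath.n2[OF G[OF k(1)]] by simp
      have "q k ! (length (q k) - 1) = q j ! i" using gpath.plast[OF G[OF k(1)]] k ji by simp
      then have "k = j" using VD[OF k(1) ji(1) lk ji(2)] by simp
      then show "i = length (q j) - 1" using gpath.nth_inj[OF g ji(2) l] gpath.plast[OF g] ji k by simp
    next
      assume "i = length (q j) - 1"
      then show "v \<in> b ` J" using gpath.plast[OF g] ji by auto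
    qed
    have aJ: "v \<in> a ` J \<longleftrightarrow> i = 0"
    proof
      assume "v \<in> a ` J"
      then obtain k where k: "k \<in> J" "v = a k" by auto
      have lk: "0 < length (q k)" using gpath.n2[OF G[OF k(1)]] by linarith
      have "q k ! 0 = q j ! i" using gpath.p0[OF G[OF k(1)]] k ji by simp
      then have "k = j" using VD[OF k(1) ji(1) lk ji(2)] by simp
      then show "i = 0" using gpath.nth_inj[OF g ji(2), of 0] gpath.p0[OF g] gpath.ne[OF g] ji k by simp
    next
      assume "i = 0"
      then show "v \<in> a ` J" using gpath.p0[OF g] ji by auto
    qed
    have D: "v \<in> Dset V M \<longleftrightarrow> i = 0"
    proof
      assume v: "v \<in> Dset V M"
      show "i = 0"
      proof (rule ccontr)
        assume "i \<noteq> 0"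
        then obtain f where "f \<in> M" "inc (q j ! i) f" using gpath.cover[OF g, of i] ji by auto
        then show False using v ji(3) by (simp add: Dset_inc)
      qed
    next
      assume "i = 0"
      then show "v \<in> Dset V M" using aJ aD ji by auto
    qed
    have D': "v \<in> Dset V M' \<longleftrightarrow> i = length (q j) - 1"
    proof
      assume v: "v \<in> Dset V M'"
      show "i = length (q j) - 1"
      proof (rule ccontr)
        assume "i \<noteq> length (q j) - 1"
        then have "Suc i < length (q j)" using ji(2) by simp
        then obtain f where "f \<in> path_edges (q j) - M" "inc (q j ! i) f"
          using gpath.nonM_exists[OF g] by blast
        moreover then have "f \<in> M'" using M'_iff ji(1) unfolding P_def by blast
        ultimately show False using v ji(3) by (simp add: Dset_inc)
      qed
    next
      assume i: "i = length (q j) - 1"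
      have "v = b j" using gpath.plast[OF g] ji i by simp
      then have "v \<in> V" using gpath.b_in_V[OF g EV] by simp
      moreover have "\<forall>f\<in>M'. \<not> inc (v, False) f"
        using CL[OF ji(1,2)] gpath.end_none[OF g] i ji(3) by auto
      ultimately show "v \<in> Dset V M'" by (simp add: Dset_inc)
    qed
    show ?thesis using bJ aJ D D' by auto
  next
    case False
    have naJ: "v \<notin> a ` J"
    proof
      assume "v \<in> a ` J"
      then obtain k where k: "k \<in> J" "v = a k" by auto
      have l: "0 < length (q k)" using gpath.ne[OF G[OF k(1)]] by simp
      have "(v,False) = q k ! 0" using gpath.p0[OF G[OF k(1)]] k by simp
      then show False using False k(1) l by blast
    qed
    have nbJ: "v \<notin> b ` J"
    proof
      assume "v \<in> b ` J"
      then obtain k where k: "k \<in> J" "v = b k" by auto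
      have "length (q k) - 1 < length (q k)" using gpath.n2[OF G[OF k(1)]] by simp
      moreover have "(v,False) = q k ! (length (q k) - 1)" using gpath.plast[OF G[OF k(1)]] k by simp
      ultimately show False using False k(1) by blast
    qed
    have "(\<forall>f\<in>M'. \<not> inc (v, False) f) \<longleftrightarrow> (\<forall>f\<in>M. \<not> inc (v, False) f)"
    proof -
      have nP: "f \<notin> P" if "inc (v,False) f" for f using ON[OF _ that] False by blast
      show ?thesis using nP M'_iff by blast
    qed
    then show ?thesis using naJ nbJ by (simp add: Dset_inc)
  qed
  then show "Dset V (symdiff M (\<Union>j\<in>J. path_edges (q j))) = (Dset V M - a ` J) \<union> b ` J"
    unfolding M'_def[symmetric] P_def[symmetric] by blast
qed

lemma card_on_list:
  assumes "distinct xs"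
  shows "int (card (W \<inter> set xs)) = (\<Sum>i<length xs. if xs!i \<in> W then 1 else 0)"
proof -
  let ?I = "{i \<in> {..<length xs}. xs!i \<in> W}"
  have e: "W \<inter> set xs = (\<lambda>i. xs!i) ` ?I" by (auto simp: in_set_conv_nth)
  have inj: "inj_on (\<lambda>i. xs!i) ?I" using assms by (auto simp: inj_on_def nth_eq_iff_index_eq)
  have "card (W \<inter> set xs) = card ?I" using e card_image[OF inj] by simp
  also have "\<dots> = (\<Sum>i\<in>?I. 1)" by simp
  finally have "int (card (W \<inter> set xs)) = (\<Sum>i\<in>?I. (1::int))" by simp
  also have "\<dots> = (\<Sum>i<length xs. if xs!i \<in> W then 1 else 0)"
    by (rule sum.inter_filter) simp
  finally show ?thesis .
qed

lemma count_change:
  fixes T :: "nat \<Rightarrow> int"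
  assumes "distinct xs" "finite W" "finite Wn" "Wn - set xs = W - set xs"
    and "\<And>i. i < length xs \<Longrightarrow> (if xs!i \<in> Wn then 1 else 0) - (if xs!i \<in> W then 1 else 0) = T (Suc i) - T i"
  shows "int (card Wn) = int (card W) + T (length xs) - T 0"
proof -
  have sp: "card A = card (A - set xs) + card (A \<inter> set xs)" if "finite A" for A :: "'a set"
  proof -
    have "A = (A - set xs) \<union> (A \<inter> set xs)" by blast
    then have "card A = card ((A - set xs) \<union> (A \<inter> set xs))" by simp
    also have "\<dots> = card (A - set xs) + card (A \<inter> set xs)"
      by (rule card_Un_disjoint) (use that in auto)
    finally show ?thesis .
  qed
  have "(\<Sum>i<length xs. (if xs!i \<in> Wn then 1 else 0) - (if xs!i \<in> W then 1 else (0::int)))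
      = (\<Sum>i<length xs. T (Suc i) - T i)" using assms(5) by simp
  also have "\<dots> = T (length xs) - T 0" by (rule sum_lessThan_telescope)
  finally have "int (card (Wn \<inter> set xs)) - int (card (W \<inter> set xs)) = T (length xs) - T 0"
    using card_on_list[OF assms(1), of Wn] card_on_list[OF assms(1), of W] by (simp add: sum_subtractf)
  then show ?thesis using sp[OF assms(2)] sp[OF assms(3)] assms(4) by simp
qed

lemma layer_result:
  fixes V :: "'v set" and E M M' :: "('v \<times> 'v) set" and J :: "nat set"
    and q :: "nat \<Rightarrow> ('v \<times> bool) list" and a b :: "nat \<Rightarrow> 'v"
  assumes fin: "finite V" and EV: "E \<subseteq> V \<times> V" and MM: "M \<in> Mset V E kk"
    and ap: "\<forall>j\<in>J. alt_path E M (q j) (a j, False) (b j, False)"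
    and aD: "\<forall>j\<in>J. a j \<in> Dset V M"
    and bD: "\<forall>j\<in>J. b j \<notin> Dset V M"
    and ia: "inj_on a J" and ib: "inj_on b J" and finJ: "finite J"
    and disj: "\<forall>j\<in>J. \<forall>k\<in>J. j \<noteq> k \<longrightarrow> path_edges (q j) \<inter> path_edges (q k) = {}"
    and M'def: "M' = symdiff M (\<Union>j\<in>J. path_edges (q j))"
  shows "M' \<in> Mset V E kk" "card (Dset V M') = kk" "card (Dset V M) = kk"
    "Dset V M' = (Dset V M - a ` J) \<union> b ` J"
proof -
  have m: "matching E M" and cM: "int (card M) = int (card V) - int kk" using MM by (auto simp: Mset_def)
  have m': "matching E M'" and D': "Dset V M' = (Dset V M - a ` J) \<union> b ` J"
    using family[OF EV m ap aD bD ia ib disj] M'def by auto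
  show "Dset V M' = (Dset V M - a ` J) \<union> b ` J" by (rule D')
  have finD: "finite (Dset V M)" using fin by (auto simp: Dset_def)
  have "card (Dset V M') = card (Dset V M)"
  proof -
    have sub: "a ` J \<subseteq> Dset V M" using aD by auto
    have dj: "(Dset V M - a ` J) \<inter> b ` J = {}" using bD by auto
    have "card (Dset V M') = card (Dset V M - a ` J) + card (b ` J)"
      unfolding D' by (rule card_Un_disjoint) (use finD finJ dj in auto)
    also have "\<dots> = card (Dset V M) - card (a ` J) + card (b ` J)"
      using card_Diff_subset[OF finite_imageI[OF finJ] sub] by simp
    also have "\<dots> = card (Dset V M)"
      using card_image[OF ia] card_image[OF ib] card_mono[OF finD sub] by simp
    finally show ?thesis .
  qed
  moreover have "card M + card (Dset V M) = card V" by (rule card_matching[OF fin EV m])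
  moreover have "card M' + card (Dset V M') = card V" by (rule card_matching[OF fin EV m'])
  ultimately show "card (Dset V M) = kk" "card (Dset V M') = kk" "M' \<in> Mset V E kk"
    using cM m' by (auto simp: Mset_def)
qed

theorem mainTheorem2:
  fixes V :: "'v set" and E1 E2 M1 M2 :: "('v \<times> 'v) set" and k1 k2 :: nat
    and vs :: "'v list" and ls :: "nat list" and ps :: "('v \<times> bool) list list"
  assumes "finite V" and "E1 \<subseteq> V \<times> V" and "E2 \<subseteq> V \<times> V"
    and "M1 \<in> Mset V E1 k1" and "M2 \<in> Mset V E2 k2"
    and "is_CLAP V E1 E2 M1 M2 vs ls ps" and "feasible_CLAP ls ps"
  shows "let M1' = apply_layer M1 1 ls ps; M2' = apply_layer M2 2 ls ps in
           M1' \<in> Mset V E1 k1 \<and> M2' \<in> Mset V E2 k2 \<and>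
           card (Dset V M1') = k1 \<and> card (Dset V M2') = k2 \<and>
           int (Delta V M1' M2') = int (Delta V M1 M2) - 2 \<and>
           int (card (Uset V M1' M2')) = int (card (Uset V M1 M2)) - 1"
proof -
  note fin = assms(1)
  define k where "k = length ls"
  define M1' where "M1' = apply_layer M1 1 ls ps"
  define M2' where "M2' = apply_layer M2 2 ls ps"
  define D1 where "D1 = Dset V M1"
  define D2 where "D2 = Dset V M2"
  define D1' where "D1' = Dset V M1'"
  define D2' where "D2' = Dset V M2'"
  have cl: "is_CLAP V E1 E2 M1 M2 vs ls ps" by (rule assms(6))
  have lvs: "length vs = Suc k" and lps: "length ps = k" using cl by (auto simp: is_CLAP_def k_def)
  have seg: "\<And>i. i < k \<Longrightarrow> ls ! i \<in> {1, 2} \<and>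
        admissible_seg V (sel (ls ! i) E1 E2) (sel (ls ! i) M1 M2) (ls ! i) (vs ! i) (vs ! Suc i) (ps ! i)"
    using cl by (auto simp: is_CLAP_def k_def)
  have vne: "vs \<noteq> []" using lvs by auto
  have h0: "vs ! 0 \<in> D1 - D2" using cl hd_conv_nth[OF vne] by (auto simp: is_CLAP_def DD1_def D1_def D2_def)
  have hk: "vs ! k \<in> D2 - D1" using cl last_conv_nth[OF vne] lvs by (auto simp: is_CLAP_def DD2_def D1_def D2_def)
  have altl: "\<And>i. Suc i < k \<Longrightarrow> ls ! Suc i \<noteq> ls ! i" using cl by (auto simp: is_CLAP_def k_def)
  have dist: "distinct vs" using cl by (auto simp: is_CLAP_def)
  have k0: "0 < k" using h0 hk by (cases k) auto
  have vinj: "\<And>i j. i \<le> k \<Longrightarrow> j \<le> k \<Longrightarrow> vs ! i = vs ! j \<longleftrightarrow> i = j"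
    using dist lvs by (simp add: nth_eq_iff_index_eq)
  have ls12: "\<And>i. i < k \<Longrightarrow> ls ! i = 1 \<or> ls ! i = 2" using seg by auto
  have seg1: "\<And>i. i < k \<Longrightarrow> ls ! i = 1 \<Longrightarrow> alt_path E1 M1 (ps ! i) (vs ! i, False) (vs ! Suc i, False)
      \<and> vs ! i \<in> D1 \<and> vs ! Suc i \<notin> D1"
  proof -
    fix i assume i: "i < k" "ls ! i = 1"
    have "admissible_seg V E1 M1 1 (vs ! i) (vs ! Suc i) (ps ! i)" using seg[OF i(1)] i(2) by (simp add: sel_def)
    then show "alt_path E1 M1 (ps ! i) (vs ! i, False) (vs ! Suc i, False) \<and> vs ! i \<in> D1 \<and> vs ! Suc i \<notin> D1"
      by (simp add: admissible_seg_def D1_def)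
  qed
  have seg2: "\<And>i. i < k \<Longrightarrow> ls ! i = 2 \<Longrightarrow> alt_path E2 M2 (ps ! i) (vs ! i, False) (vs ! Suc i, False)
      \<and> vs ! i \<notin> D2 \<and> vs ! Suc i \<in> D2"
  proof -
    fix i assume i: "i < k" "ls ! i = 2"
    have "admissible_seg V E2 M2 2 (vs ! i) (vs ! Suc i) (ps ! i)" using seg[OF i(1)] i(2) by (simp add: sel_def)
    then show "alt_path E2 M2 (ps ! i) (vs ! i, False) (vs ! Suc i, False) \<and> vs ! i \<notin> D2 \<and> vs ! Suc i \<in> D2"
      by (simp add: admissible_seg_def D2_def)
  qed
  define J1 where "J1 = {i. i < k \<and> ls ! i = 1}"
  define J2 where "J2 = {i. i < k \<and> ls ! i = 2}"
  have feas: "\<And>i j. i < k \<Longrightarrow> j < k \<Longrightarrow> i \<noteq> j \<Longrightarrow> ls ! i = ls ! j \<Longrightarrow>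
        path_edges (ps ! i) \<inter> path_edges (ps ! j) = {}"
    using assms(7) by (auto simp: feasible_CLAP_def k_def)
  have U1: "M1' = symdiff M1 (\<Union>j\<in>J1. path_edges (ps ! j))"
  proof -
    have "\<Union>{path_edges (ps ! i) |i. i < length ls \<and> ls ! i = 1} = (\<Union>j\<in>J1. path_edges (ps ! j))"
      unfolding J1_def k_def by auto
    then show ?thesis unfolding M1'_def apply_layer_def by simp
  qed
  have U2: "M2' = symdiff M2 (\<Union>j\<in>J2. path_edges (rev (ps ! j)))"
  proof -
    have "\<And>j. j \<in> J2 \<Longrightarrow> path_edges (rev (ps ! j)) = path_edges (ps ! j)"
      using seg2 alt_path_rev(2) unfolding J2_def by blast
    then have "(\<Union>j\<in>J2. path_edges (rev (ps ! j))) = (\<Union>j\<in>J2. path_edges (ps ! j))" by simp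
    then show ?thesis
    proof -
      have "\<Union>{path_edges (ps ! i) |i. i < length ls \<and> ls ! i = 2} = (\<Union>j\<in>J2. path_edges (ps ! j))"
        unfolding J2_def k_def by auto
      then show ?thesis unfolding M2'_def apply_layer_def using \<open>(\<Union>j\<in>J2. path_edges (rev (ps ! j))) = (\<Union>j\<in>J2. path_edges (ps ! j))\<close> by simp
    qed
  qed
  have finJ1: "finite J1" and finJ2: "finite J2" unfolding J1_def J2_def by auto
  have ap1: "\<forall>j\<in>J1. alt_path E1 M1 (ps ! j) (vs ! j, False) (vs ! Suc j, False)"
    and aD1: "\<forall>j\<in>J1. vs ! j \<in> Dset V M1" and bD1: "\<forall>j\<in>J1. vs ! Suc j \<notin> Dset V M1"
    using seg1 unfolding J1_def D1_def by auto
  have ia1: "inj_on (\<lambda>j. vs ! j) J1" and ib1: "inj_on (\<lambda>j. vs ! Suc j) J1"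
    unfolding inj_on_def J1_def using vinj by auto
  have dj1: "\<forall>j\<in>J1. \<forall>k\<in>J1. j \<noteq> k \<longrightarrow> path_edges (ps ! j) \<inter> path_edges (ps ! k) = {}"
    using feas unfolding J1_def by auto
  note L1 = layer_result[OF fin assms(2) assms(4) ap1 aD1 bD1 ia1 ib1 finJ1 dj1 U1,
     folded D1_def D1'_def]
  have ap2: "\<forall>j\<in>J2. alt_path E2 M2 (rev (ps ! j)) (vs ! Suc j, False) (vs ! j, False)"
    using seg2 alt_path_rev(1) unfolding J2_def by blast
  have aD2: "\<forall>j\<in>J2. vs ! Suc j \<in> Dset V M2" and bD2: "\<forall>j\<in>J2. vs ! j \<notin> Dset V M2"
    using seg2 unfolding J2_def D2_def by auto
  have ia2: "inj_on (\<lambda>j. vs ! j) J2" and ib2: "inj_on (\<lambda>j. vs ! Suc j) J2"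
    unfolding inj_on_def J2_def using vinj by auto
  have "path_edges (rev (ps ! j)) = path_edges (ps ! j)" if "j \<in> J2" for j
    using seg2 alt_path_rev(2) that unfolding J2_def by blast
  then have dj2: "\<forall>j\<in>J2. \<forall>k\<in>J2. j \<noteq> k \<longrightarrow> path_edges (rev (ps ! j)) \<inter> path_edges (rev (ps ! k)) = {}"
    using feas unfolding J2_def by auto
  note L2 = layer_result[OF fin assms(3) assms(5) ap2 aD2 bD2 ib2 ia2 finJ2 dj2 U2,
     folded D2_def D2'_def]
  have imA: "vs ! i \<in> (\<lambda>j. vs ! j) ` J \<longleftrightarrow> i \<in> J" if "i \<le> k" "J \<subseteq> {..<k}" for i J
    using vinj that by force
  have imB: "vs ! i \<in> (\<lambda>j. vs ! Suc j) ` J \<longleftrightarrow> (0 < i \<and> i - 1 \<in> J)" if "i \<le> k" "J \<subseteq> {..<k}" for i J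
  proof
    assume "vs ! i \<in> (\<lambda>j. vs ! Suc j) ` J"
    then obtain j where "j \<in> J" "vs ! i = vs ! Suc j" by auto
    then show "0 < i \<and> i - 1 \<in> J" using vinj[of i "Suc j"] that by auto
  next
    assume "0 < i \<and> i - 1 \<in> J"
    then show "vs ! i \<in> (\<lambda>j. vs ! Suc j) ` J" by (intro image_eqI[of _ _ "i - 1"]) auto
  qed
  have J1s: "J1 \<subseteq> {..<k}" and J2s: "J2 \<subseteq> {..<k}" unfolding J1_def J2_def by auto
  have new1: "vs ! i \<in> D1' \<longleftrightarrow> (vs ! i \<in> D1 \<and> \<not> (i < k \<and> ls ! i = 1)) \<or> (0 < i \<and> ls ! (i - 1) = 1)"
    if "i \<le> k" for i
    using L1(4) imA[OF that J1s] imB[OF that J1s] that unfolding J1_def by auto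
  have new2: "vs ! i \<in> D2' \<longleftrightarrow> (vs ! i \<in> D2 \<and> \<not> (0 < i \<and> ls ! (i - 1) = 2)) \<or> (i < k \<and> ls ! i = 2)"
    if "i \<le> k" for i
    using L2(4) imA[OF that J2s] imB[OF that J2s] that unfolding J2_def by auto
  have out: "(v \<in> D1' \<longleftrightarrow> v \<in> D1) \<and> (v \<in> D2' \<longleftrightarrow> v \<in> D2)" if "v \<notin> set vs" for v
  proof -
    have "(\<lambda>j. vs ! j) ` J1 \<subseteq> set vs" "(\<lambda>j. vs ! Suc j) ` J1 \<subseteq> set vs"
      "(\<lambda>j. vs ! j) ` J2 \<subseteq> set vs" "(\<lambda>j. vs ! Suc j) ` J2 \<subseteq> set vs"
      using lvs unfolding J1_def J2_def by auto
    then show ?thesis using L1(4) L2(4) that by blast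
  qed
  have old: "(vs ! i \<in> D1 \<longleftrightarrow> i \<noteq> k \<and> \<not> (0 < i \<and> ls ! (i - 1) = 1)) \<and>
             (vs ! i \<in> D2 \<longleftrightarrow> i = k \<or> (0 < i \<and> ls ! (i - 1) = 2))" if "i \<le> k" for i
  proof (cases "i = 0")
    case True then show ?thesis using h0 k0 by auto
  next
    case False
    show ?thesis
    proof (cases "i = k")
      case True then show ?thesis using hk k0 False by auto
    next
      case ik: False
      have i1: "i - 1 < k" "Suc (i - 1) = i" "i < k" using False ik that by auto
      have alt: "ls ! i \<noteq> ls ! (i - 1)" using altl[of "i - 1"] i1 by simp
      show ?thesis
      proof (cases "ls ! (i - 1) = 1")
        case True
        then have "ls ! i = 2" using alt ls12[OF i1(3)] by auto
        then show ?thesis using seg1[OF i1(1) True] seg2[OF i1(3)] i1 True False ik by auto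
      next
        case c2: False
        then have l2: "ls ! (i - 1) = 2" using ls12[OF i1(1)] by auto
        then have "ls ! i = 1" using alt ls12[OF i1(3)] by auto
        then show ?thesis using seg2[OF i1(1) l2] seg1[OF i1(3)] i1 l2 False ik by auto
      qed
    qed
  qed
  have ls12': "ls ! i = 1 \<or> ls ! i = 2" if "i < k" for i using ls12 that by blast
  have altv: "ls ! i \<noteq> ls ! (i - 1)" if "0 < i" "i < k" for i using altl[of "i - 1"] that by simp
  have finD: "finite D1" "finite D2" "finite D1'" "finite D2'"
    unfolding D1_def D2_def D1'_def D2'_def using fin by (auto simp: Dset_def)
  define t where "t j = (if ls ! j = 2 then 1 else 0 :: int)" for j
  define T where "T i = (if i = 0 then 1 else if i \<le> k then t (i - 1) else 0)" for i
  have cU: "int (card (D1' \<union> D2')) = int (card (D1 \<union> D2)) + T (length vs) - T 0"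
  proof (rule count_change[OF dist])
    show "finite (D1 \<union> D2)" "finite (D1' \<union> D2')" using finD by auto
    show "D1' \<union> D2' - set vs = D1 \<union> D2 - set vs" using out by blast
    fix i assume "i < length vs"
    then have i: "i \<le> k" using lvs by simp
    show "(if vs ! i \<in> D1' \<union> D2' then 1 else 0) - (if vs ! i \<in> D1 \<union> D2 then 1 else 0) = T (Suc i) - T i"
    proof (cases "i = 0")
      case True then show ?thesis using new1[OF i] new2[OF i] old[OF i] k0 ls12'[of 0]
        by (auto simp: T_def t_def)
    next
      case False
      show ?thesis
      proof (cases "i = k")
        case True then show ?thesis using new1[OF i] new2[OF i] old[OF i] k0 ls12'[of "k - 1"] False
          by (auto simp: T_def t_def)
      next
        case ik: False
        then have ik': "i < k" using i by simp
        have i1: "i - 1 < k" using ik' by simp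
        show ?thesis using new1[OF i] new2[OF i] old[OF i] ls12'[OF i1] ls12'[OF ik'] False
            altv[of i] ik'
          by (auto simp: T_def t_def)
      qed
    qed
  qed
  define T' where "T' i = (if i = 0 then 2 else if i \<le> k then 1 else 0 :: int)" for i
  have cX: "int (card ((D1' - D2') \<union> (D2' - D1'))) = int (card ((D1 - D2) \<union> (D2 - D1))) + T' (length vs) - T' 0"
  proof (rule count_change[OF dist])
    show "finite ((D1 - D2) \<union> (D2 - D1))" "finite ((D1' - D2') \<union> (D2' - D1'))" using finD by auto
    show "(D1' - D2') \<union> (D2' - D1') - set vs = (D1 - D2) \<union> (D2 - D1) - set vs" using out by blast
    fix i assume "i < length vs"
    then have i: "i \<le> k" using lvs by simp
    show "(if vs ! i \<in> (D1' - D2') \<union> (D2' - D1') then 1 else 0) - (if vs ! i \<in> (D1 - D2) \<union> (D2 - D1) then 1 else 0) = T' (Suc i) - T' i"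
    proof (cases "i = 0")
      case True then show ?thesis using new1[OF i] new2[OF i] old[OF i] k0 ls12'[of 0]
        by (auto simp: T'_def)
    next
      case False
      show ?thesis
      proof (cases "i = k")
        case True then show ?thesis using new1[OF i] new2[OF i] old[OF i] k0 ls12'[of "k - 1"] False
          by (auto simp: T'_def)
      next
        case ik: False
        then have ik': "i < k" using i by simp
        have i1: "i - 1 < k" using ik' by simp
        show ?thesis using new1[OF i] new2[OF i] old[OF i] ls12'[OF i1] ls12'[OF ik'] False
            altv[of i] ik'
          by (auto simp: T'_def)
      qed
    qed
  qed
  have Dl: "Delta V A B = card ((Dset V A - Dset V B) \<union> (Dset V B - Dset V A))" if "finite V" for A B
    unfolding Delta_def DD1_def DD2_def
    by (rule card_Un_disjoint[symmetric]) (use that in \<open>auto simp: Dset_def\<close>)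
  have "int (Delta V M1' M2') = int (Delta V M1 M2) - 2"
    using cX Dl[OF fin, of M1' M2'] Dl[OF fin, of M1 M2] lvs
    unfolding D1_def D2_def D1'_def D2'_def by (simp add: T'_def)
  moreover have "int (card (Uset V M1' M2')) = int (card (Uset V M1 M2)) - 1"
    using cU lvs unfolding Uset_def D1_def D2_def D1'_def D2'_def by (simp add: T_def)
  ultimately show ?thesis
    using L1(1,2) L2(1,2) unfolding Let_def M1'_def[symmetric] M2'_def[symmetric] D1'_def D2'_def by simp
qed

end
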